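(* Let $\mathcal{G}=(\mathcal{V},\mathcal{E})$ be a connected directed graph, let $\Gamma$ be a set of independent closed paths spanning the cycle space of $\mathcal{G}$, let $\delta'_{ij}\in\mathbb{Z}$ be given for each $(i,j)\in\mathcal{E}$, and let $c=(c_{ij})$ be a real cost vector on the flow variables. Let $\mathcal{H}=\{\mathcal{G}^k=(\mathcal{V}^k,\mathcal{E}^k): k=1,\dots,\mathcal{K}\}$ be any decomposition of $\mathcal{G}$ that covers it, i.e. $\mathcal{V}^k=\mathcal{V}$ for all $k$ and $\bigcup_k\mathcal{E}^k=\mathcal{E}$, where each $\mathcal{G}^k$ comes with a cycle set $\Gamma^k\subset\Gamma$, and let the costs be split as $c^k_{ij}$ with $\sum_{k\in\mathcal{G}_e(i,j)}c^k_{ij}=c_{ij}$ for every edge $(i,j)$. Then $\mathbb{LR}\le\mathbb{PU}$. Furthermore, if $\bigcap_k\mathcal{A}(\Gamma^k)=\mathcal{A}(\Gamma)$, then $\mathbb{LR}=\mathbb{PU}$.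
   Context: Flow variables: for each edge $(i,j)\in\mathcal{E}$ there are two nonnegative flow variables $\delta_{ij},\delta_{ji}$; $\delta$ denotes the vector of all flow variables, and the objective is the linear function $\sum c_{ij}\delta_{ij}$ summed over the flow variables. For a set $\Gamma'$ of closed paths (each a sequence of arcs $C$), $\mathcal{A}(\Gamma')$ denotes the set of flow vectors satisfying, for every $C\in\Gamma'$, $\sum_{(i,j)\in C}(\delta_{ij}-\delta_{ji})=\sum_{(i,j)\in C}\delta'_{ij}$. Definitions: $\mathbb{PU}=\min\{\sum c_{ij}\delta_{ij}: \delta\in\mathcal{A}(\Gamma),\ \delta\in\{0,1\}\}$ (transformed phase unwrapping); $\mathbb{LP}$ is the same with $\delta\in[0,1]$. $\mathcal{G}_e(i,j)$ is the set of indices $k$ of subgraphs containing edge $(i,j)$. For each $k$ introduce local flow variables $\delta^k$ on the edges of $\mathcal{E}^k$, required (in the consistency-constrained reformulation) to equal the global $\delta$; $\mathbb{LR}$ is the Lagrangian relaxation of these consistency constraints with a multiplier $\lambda^k_{ij}$ for each constraint $\delta^k_{ij}=\delta_{ij}$: $\mathbb{LR}=\max_{\lambda}\ \min\Big\{\sum_k\sum_{ij\in\mathcal{E}^k}\big(c^k_{ij}\delta^k_{ij}+\lambda^k_{ij}(\delta^k_{ij}-\delta_{ij})\big):\ \delta^k\in\mathcal{A}(\Gamma^k),\ \delta^k\in[0,1],\ \delta\in[0,1]\Big\}$, i.e. $\max_\lambda\sum_k f^k(\lambda^k)$ where $f^k$ is the $k$-th subproblem. *)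

theory Defs
  imports Complex_Main "HOL-Library.Extended_Real"
begin

text \<open>For each arc e = (i,j) there are two flow variables:
  flow e True stands for delta_ij and flow e False stands for delta_ji.
  A flow vector is therefore a function of type ('v*'v) => bool => real;
  only its values on arcs of E matter.\<close>

type_synonym 'v flow = "'v \<times> 'v \<Rightarrow> bool \<Rightarrow> real"

text \<open>An oriented arc (e, True) traverses e = (i,j) from i to j,
  (e, False) traverses it backwards from j to i. A closed path is a
  nonempty list of oriented arcs forming a closed walk.\<close>

type_synonym 'v path = "(('v \<times> 'v) \<times> bool) list"

definition tail_of :: "('v \<times> 'v) \<times> bool \<Rightarrow> 'v" where
  "tail_of a = (if snd a then fst (fst a) else snd (fst a))"

definition head_of :: "('v \<times> 'v) \<times> bool \<Rightarrow> 'v" where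
  "head_of a = (if snd a then snd (fst a) else fst (fst a))"

definition closed_path :: "('v \<times> 'v) set \<Rightarrow> 'v path \<Rightarrow> bool" where
  "closed_path E C \<longleftrightarrow> C \<noteq> [] \<and> (\<forall>a\<in>set C. fst a \<in> E)
     \<and> (\<forall>n. Suc n < length C \<longrightarrow> head_of (C ! n) = tail_of (C ! Suc n))
     \<and> head_of (last C) = tail_of (hd C)"

definition path_vec :: "'v path \<Rightarrow> ('v \<times> 'v) \<Rightarrow> real" where
  "path_vec C e = sum_list (map (\<lambda>a. if fst a = e then (if snd a then 1 else -1) else 0) C)"

definition cycle_space :: "'v set \<Rightarrow> ('v \<times> 'v) set \<Rightarrow> (('v \<times> 'v) \<Rightarrow> real) set" where
  "cycle_space V E = {x. (\<forall>e. e \<notin> E \<longrightarrow> x e = 0) \<and>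
     (\<forall>v\<in>V. (\<Sum>e\<in>{e\<in>E. fst e = v}. x e) = (\<Sum>e\<in>{e\<in>E. snd e = v}. x e))}"

definition spans_cycle_space :: "'v set \<Rightarrow> ('v \<times> 'v) set \<Rightarrow> 'v path set \<Rightarrow> bool" where
  "spans_cycle_space V E \<Gamma> \<longleftrightarrow>
     (\<forall>x\<in>cycle_space V E. \<exists>a. x = (\<lambda>e. \<Sum>C\<in>\<Gamma>. a C * path_vec C e))"

definition independent_paths :: "'v path set \<Rightarrow> bool" where
  "independent_paths \<Gamma> \<longleftrightarrow>
     (\<forall>a. (\<forall>e. (\<Sum>C\<in>\<Gamma>. a C * path_vec C e) = 0) \<longrightarrow> (\<forall>C\<in>\<Gamma>. a C = 0))"

definition connected_graph :: "'v set \<Rightarrow> ('v \<times> 'v) set \<Rightarrow> bool" where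
  "connected_graph V E \<longleftrightarrow> (\<forall>u\<in>V. \<forall>v\<in>V. (u, v) \<in> (E \<union> E\<inverse>)\<^sup>*)"

text \<open>Traversing an arc
  backwards (j to i) the term is delta_ji - delta_ij and delta'_ji = - delta'_ij.\<close>

definition path_flow_sum :: "'v flow \<Rightarrow> 'v path \<Rightarrow> real" where
  "path_flow_sum d C = sum_list (map (\<lambda>a. if snd a then d (fst a) True - d (fst a) False
                                               else d (fst a) False - d (fst a) True) C)"

definition path_offset_sum :: "('v \<times> 'v \<Rightarrow> int) \<Rightarrow> 'v path \<Rightarrow> real" where
  "path_offset_sum dp C = sum_list (map (\<lambda>a. if snd a then real_of_int (dp (fst a))
                                                   else - real_of_int (dp (fst a))) C)"

definition Aset :: "('v \<times> 'v \<Rightarrow> int) \<Rightarrow> 'v path set \<Rightarrow> 'v flow set" where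
  "Aset dp \<Gamma>' = {d. \<forall>C\<in>\<Gamma>'. path_flow_sum d C = path_offset_sum dp C}"

definition cost :: "('v \<times> 'v) set \<Rightarrow> 'v flow \<Rightarrow> 'v flow \<Rightarrow> real" where
  "cost E c d = (\<Sum>e\<in>E. c e True * d e True + c e False * d e False)"

text \<open>PU: minimum over binary flow vectors in A(Gamma) (infimum in the
  extended reals; +infinity if infeasible).\<close>

definition PU :: "('v \<times> 'v) set \<Rightarrow> 'v path set \<Rightarrow> ('v \<times> 'v \<Rightarrow> int) \<Rightarrow> 'v flow \<Rightarrow> ereal" where
  "PU E \<Gamma> dp c = (INF d\<in>{d. d \<in> Aset dp \<Gamma> \<and> (\<forall>e\<in>E. \<forall>b. d e b \<in> {0, 1})}. ereal (cost E c d))"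

definition LP :: "('v \<times> 'v) set \<Rightarrow> 'v path set \<Rightarrow> ('v \<times> 'v \<Rightarrow> int) \<Rightarrow> 'v flow \<Rightarrow> ereal" where
  "LP E \<Gamma> dp c = (INF d\<in>{d. d \<in> Aset dp \<Gamma> \<and> (\<forall>e\<in>E. \<forall>b. d e b \<in> {0..1})}. ereal (cost E c d))"

text \<open>Lagrangian relaxation. Subgraphs are indexed by k in {1..K}, with arc
  sets Ek k, cycle sets Gk k and cost splits ck k. Local flows are ds k,
  the global flow is d, multipliers are lam k e b.\<close>

definition lagrangian ::
  "nat \<Rightarrow> (nat \<Rightarrow> ('v \<times> 'v) set) \<Rightarrow> (nat \<Rightarrow> 'v flow) \<Rightarrow> (nat \<Rightarrow> 'v flow)
     \<Rightarrow> (nat \<Rightarrow> 'v flow) \<Rightarrow> 'v flow \<Rightarrow> real" where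
  "lagrangian K Ek ck lam ds d =
     (\<Sum>k\<in>{1..K}. \<Sum>e\<in>Ek k. \<Sum>b\<in>(UNIV::bool set).
        ck k e b * ds k e b + lam k e b * (ds k e b - d e b))"

definition LR ::
  "('v \<times> 'v) set \<Rightarrow> ('v \<times> 'v \<Rightarrow> int) \<Rightarrow> nat \<Rightarrow> (nat \<Rightarrow> ('v \<times> 'v) set)
     \<Rightarrow> (nat \<Rightarrow> 'v path set) \<Rightarrow> (nat \<Rightarrow> 'v flow) \<Rightarrow> ereal" where
  "LR E dp K Ek Gk ck =
     (SUP lam\<in>(UNIV :: (nat \<Rightarrow> 'v flow) set).
        (INF p\<in>{(ds, d). (\<forall>k\<in>{1..K}. ds k \<in> Aset dp (Gk k) \<and> (\<forall>e\<in>Ek k. \<forall>b. ds k e b \<in> {0..1}))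
                       \<and> (\<forall>e\<in>E. \<forall>b. d e b \<in> {0..1})}.
            ereal (lagrangian K Ek ck lam (fst p) (snd p))))"

end

theory Submission imports Defs "HOL-Analysis.Henstock_Kurzweil_Integration" begin

definition lin :: "(('i \<Rightarrow> real) \<Rightarrow> real) \<Rightarrow> bool" where
  "lin a \<longleftrightarrow> (\<forall>x y s. a (\<lambda>j. x j + s * y j) = a x + s * a y)"

lemma linD: "lin a \<Longrightarrow> a (\<lambda>j. x j + s * y j) = a x + s * a y"
  by (simp add: lin_def)

lemma lin_zero: "lin a \<Longrightarrow> a (\<lambda>j. 0) = 0"
  using linD[of a "\<lambda>j. 0" 1 "\<lambda>j. 0"] by simp

lemma lin_scale: "lin a \<Longrightarrow> a (\<lambda>j. s * y j) = s * a y"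
  using linD[of a "\<lambda>j. 0" s y] lin_zero[of a] by simp

lemma farkas:
  fixes A :: "'c \<Rightarrow> ('j \<Rightarrow> real) \<Rightarrow> real" and b :: "('j \<Rightarrow> real) \<Rightarrow> real"
  assumes "finite I"
  shows "(\<forall>i\<in>I. lin (A i)) \<Longrightarrow> lin b \<Longrightarrow> (\<forall>x. (\<forall>i\<in>I. 0 \<le> A i x) \<longrightarrow> 0 \<le> b x)
    \<Longrightarrow> \<exists>y. (\<forall>i\<in>I. 0 \<le> y i) \<and> (\<forall>x. b x = (\<Sum>i\<in>I. y i * A i x))"
  using assms
proof (induction I arbitrary: A b rule: finite_induct)
  case empty
  have "b x = 0" for x
  proof -
    have "0 \<le> b x" using empty by simp
    moreover have "0 \<le> b (\<lambda>j. (-1) * x j)" using empty by simp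
    then have "0 \<le> - b x" using lin_scale[OF empty(2), of "-1" x] by simp
    ultimately show ?thesis by simp
  qed
  then show ?case by simp
next
  case (insert i0 I)
  show ?case
  proof (cases "\<forall>x. (\<forall>i\<in>I. 0 \<le> A i x) \<longrightarrow> 0 \<le> b x")
    case True
    then obtain y where y: "\<forall>i\<in>I. 0 \<le> y i" "\<forall>x. b x = (\<Sum>i\<in>I. y i * A i x)"
      using insert.IH insert.prems by blast
    define y' where "y' = y(i0 := 0)"
    have "\<forall>x. b x = (\<Sum>i\<in>insert i0 I. y' i * A i x)"
    proof
      fix x
      have "(\<Sum>i\<in>insert i0 I. y' i * A i x) = (\<Sum>i\<in>I. y' i * A i x)"
        using insert.hyps(1,2) by (simp add: y'_def)
      also have "\<dots> = (\<Sum>i\<in>I. y i * A i x)"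
        using insert.hyps(2) by (intro sum.cong) (auto simp: y'_def)
      finally show "b x = (\<Sum>i\<in>insert i0 I. y' i * A i x)" using y by simp
    qed
    moreover have "\<forall>i\<in>insert i0 I. 0 \<le> y' i" using y by (auto simp: y'_def)
    ultimately show ?thesis by blast
  next
    case False
    then obtain z where z: "\<forall>i\<in>I. 0 \<le> A i z" "b z < 0" by force
    have al: "A i0 z < 0"
    proof (rule ccontr)
      assume "\<not> A i0 z < 0"
      then have "\<forall>i\<in>insert i0 I. 0 \<le> A i z" using z by auto
      then show False using insert.prems(3) z by force
    qed
    define \<alpha> where "\<alpha> = A i0 z"
    have an: "\<alpha> \<noteq> 0" using al by (simp add: \<alpha>_def)
    define P where "P x = (\<lambda>j. x j + (- A i0 x / \<alpha>) * z j)" for x :: "'j \<Rightarrow> real"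
    have linA: "lin (A i)" if "i \<in> insert i0 I" for i using insert.prems(1) that by blast
    have AP: "A i (P x) = A i x + (- A i0 x / \<alpha>) * A i z" if "i \<in> insert i0 I" for i x
      unfolding P_def using linD[OF linA[OF that]] by blast
    have bP: "b (P x) = b x + (- A i0 x / \<alpha>) * b z" for x
      unfolding P_def using linD[OF insert.prems(2)] by blast
    have A0P: "A i0 (P x) = 0" for x
      using AP[of i0 x] al by (simp add: \<alpha>_def)
    have Plin: "P (\<lambda>j. x j + s * y j) = (\<lambda>j. P x j + s * P y j)" for x y s
    proof -
      have "A i0 (\<lambda>j. x j + s * y j) = A i0 x + s * A i0 y" using linD[OF linA] by blast
      then show ?thesis unfolding P_def using an by (auto simp: field_simps fun_eq_iff)
    qed
    have "\<exists>\<mu>. (\<forall>i\<in>I. 0 \<le> \<mu> i) \<and> (\<forall>x. (b \<circ> P) x = (\<Sum>i\<in>I. \<mu> i * (A i \<circ> P) x))"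
    proof -
      have h1: "\<forall>i\<in>I. lin (A i \<circ> P)"
        using linA unfolding lin_def by (simp add: Plin)
      have h2: "lin (b \<circ> P)"
        using insert.prems(2) unfolding lin_def by (simp add: Plin)
      have h3: "\<forall>x. (\<forall>i\<in>I. 0 \<le> (A i \<circ> P) x) \<longrightarrow> 0 \<le> (b \<circ> P) x"
        using insert.prems(3) A0P by auto
      show ?thesis using insert.IH[of "\<lambda>i. A i \<circ> P" "b \<circ> P"] h1 h2 h3 by blast
    qed
    then obtain \<mu> where mu: "\<forall>i\<in>I. 0 \<le> \<mu> i" "\<forall>x. b (P x) = (\<Sum>i\<in>I. \<mu> i * A i (P x))"
      by auto
    define \<gamma> where "\<gamma> = (b z - (\<Sum>i\<in>I. \<mu> i * A i z)) / \<alpha>"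
    have "(\<Sum>i\<in>I. \<mu> i * A i z) \<ge> 0" using mu z by (intro sum_nonneg) auto
    then have g0: "\<gamma> \<ge> 0" using al z unfolding \<gamma>_def \<alpha>_def
      by (intro divide_nonpos_neg) auto
    define y where "y = \<mu>(i0 := \<gamma>)"
    have "b x = (\<Sum>i\<in>insert i0 I. y i * A i x)" for x
    proof -
      have "b x + (- A i0 x / \<alpha>) * b z = (\<Sum>i\<in>I. \<mu> i * (A i x + (- A i0 x / \<alpha>) * A i z))"
        using mu(2) AP bP by simp
      also have "\<dots> = (\<Sum>i\<in>I. \<mu> i * A i x + (- A i0 x / \<alpha>) * (\<mu> i * A i z))"
        by (intro sum.cong) (auto simp: algebra_simps)
      also have "\<dots> = (\<Sum>i\<in>I. \<mu> i * A i x) + (- A i0 x / \<alpha>) * (\<Sum>i\<in>I. \<mu> i * A i z)"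
        by (simp only: sum.distrib sum_distrib_left)
      finally have "b x = (\<Sum>i\<in>I. \<mu> i * A i x) + A i0 x * \<gamma>"
        using al unfolding \<gamma>_def \<alpha>_def by (simp add: field_simps)
      moreover have "(\<Sum>i\<in>insert i0 I. y i * A i x) = \<gamma> * A i0 x + (\<Sum>i\<in>I. \<mu> i * A i x)"
        using insert.hyps(1,2) unfolding y_def by (simp, intro sum.cong) auto
      ultimately show ?thesis by simp
    qed
    moreover have "\<forall>i\<in>insert i0 I. 0 \<le> y i" using mu g0 insert.hyps(2) by (auto simp: y_def)
    ultimately show ?thesis by blast
  qed
qed


lemma lagr:
  fixes A :: "'c \<Rightarrow> ('j \<Rightarrow> real) \<Rightarrow> real" and f :: "('j \<Rightarrow> real) \<Rightarrow> real"
    and G :: "'l \<Rightarrow> ('j \<Rightarrow> real) \<Rightarrow> real" and c :: "'c \<Rightarrow> real"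
  assumes fI: "finite I" and fL: "finite L"
    and lA: "\<forall>i\<in>I. lin (A i)" and lf: "lin f" and lG: "\<forall>l\<in>L. lin (G l)"
    and rec: "\<forall>x. (\<forall>i\<in>I. 0 \<le> A i x) \<and> (\<forall>l\<in>L. G l x = 0) \<longrightarrow> 0 \<le> f x"
    and main: "\<forall>x. (\<forall>i\<in>I. c i \<le> A i x) \<and> (\<forall>l\<in>L. G l x = 0) \<longrightarrow> v \<le> f x"
  shows "\<exists>\<mu>. \<forall>x. (\<forall>i\<in>I. c i \<le> A i x) \<longrightarrow> v \<le> f x + (\<Sum>l\<in>L. \<mu> l * G l x)"
proof -
  define S :: "('j option \<Rightarrow> real) \<Rightarrow> 'j \<Rightarrow> real" where "S x' = (\<lambda>j. x' (Some j))" for x'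
  define AA :: "('c + 'l \<times> bool) option \<Rightarrow> ('j option \<Rightarrow> real) \<Rightarrow> real" where
    "AA w x' = (case w of None \<Rightarrow> x' None
        | Some (Inl i) \<Rightarrow> A i (S x') - c i * x' None
        | Some (Inr (l, b)) \<Rightarrow> (if b then G l (S x') else - G l (S x')))" for w x'
  define bb where "bb x' = f (S x') - v * x' None" for x'
  define II :: "('c + 'l \<times> bool) option set" where "II = insert None (Some ` (Inl ` I \<union> Inr ` (L \<times> UNIV)))"
  have fII: "finite II" unfolding II_def using fI fL by simp
  have Slin: "S (\<lambda>j. x j + s * y j) = (\<lambda>j. S x j + s * S y j)" for x y s
    by (simp add: S_def)
  have lAA: "\<forall>w\<in>II. lin (AA w)"
  proof
    fix w assume w: "w \<in> II"
    show "lin (AA w)"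
    proof (cases w)
      case None then show ?thesis unfolding AA_def lin_def by simp
    next
      case (Some q)
      show ?thesis
      proof (cases q)
        case (Inl i)
        then have "i \<in> I" using w Some by (auto simp: II_def)
        then show ?thesis using lA Some Inl unfolding lin_def AA_def
          by (simp add: Slin algebra_simps)
      next
        case (Inr lb)
        then obtain l b where lb: "lb = (l, b)" by force
        then have "l \<in> L" using w Some Inr by (auto simp: II_def)
        then show ?thesis using lG Some Inr lb unfolding lin_def AA_def
          by (simp add: Slin algebra_simps)
      qed
    qed
  qed
  have lbb: "lin bb" using lf unfolding lin_def bb_def by (simp add: Slin algebra_simps)
  have hyp: "\<forall>x'. (\<forall>w\<in>II. 0 \<le> AA w x') \<longrightarrow> 0 \<le> bb x'"
  proof (intro allI impI)
    fix x' assume h: "\<forall>w\<in>II. 0 \<le> AA w x'"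
    have t0: "0 \<le> x' None" using bspec[OF h, of None] by (simp add: II_def AA_def)
    have hA: "c i * x' None \<le> A i (S x')" if "i \<in> I" for i
      using bspec[OF h, of "Some (Inl i)"] that by (simp add: II_def AA_def)
    have hG: "G l (S x') = 0" if "l \<in> L" for l
    proof -
      have "0 \<le> G l (S x')" using bspec[OF h, of "Some (Inr (l, True))"] that by (simp add: II_def AA_def)
      moreover have "0 \<le> - G l (S x')"
        using bspec[OF h, of "Some (Inr (l, False))"] that by (simp add: II_def AA_def)
      ultimately show ?thesis by simp
    qed
    show "0 \<le> bb x'"
    proof (cases "x' None = 0")
      case True
      then show ?thesis using rec hA hG by (simp add: bb_def)
    next
      case False
      then have tp: "x' None > 0" using t0 by simp
      define x where "x = (\<lambda>j. (1 / x' None) * S x' j)"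
      have "c i \<le> A i x" if "i \<in> I" for i
      proof -
        have "A i x = (1 / x' None) * A i (S x')"
          unfolding x_def using lin_scale lA that by blast
        then have "x' None * A i x = A i (S x')" using tp by (simp add: field_simps)
        then have "x' None * c i \<le> x' None * A i x" using hA[OF that] by (simp add: mult.commute)
        then show ?thesis using tp by (simp add: mult_le_cancel_left_pos)
      qed
      moreover have "G l x = 0" if "l \<in> L" for l
        unfolding x_def using lin_scale[of "G l" "1 / x' None" "S x'"] lG that hG by simp
      ultimately have "v \<le> f x" using main by blast
      moreover have "f x = (1 / x' None) * f (S x')"
        unfolding x_def using lin_scale lf by blast
      ultimately show ?thesis using tp by (simp add: bb_def field_simps)
    qed
  qed
  obtain y where y: "\<forall>w\<in>II. 0 \<le> y w" "\<forall>x'. bb x' = (\<Sum>w\<in>II. y w * AA w x')"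
    using farkas[OF fII lAA lbb hyp] by blast
  define \<mu> where "\<mu> l = y (Some (Inr (l, False))) - y (Some (Inr (l, True)))" for l
  show ?thesis
  proof (intro exI allI impI)
    fix x assume hx: "\<forall>i\<in>I. c i \<le> A i x"
    define x' where "x' = (\<lambda>w. case w of None \<Rightarrow> 1 | Some j \<Rightarrow> x j)"
    have Sx: "S x' = x" by (simp add: S_def x'_def)
    have x1: "x' None = 1" by (simp add: x'_def)
    have "f x - v = (\<Sum>w\<in>II. y w * AA w x')" using y(2)[rule_format, of x'] Sx x1 by (simp add: bb_def)
    also have "\<dots> = y None * AA None x' + (\<Sum>w\<in>Some ` (Inl ` I \<union> Inr ` (L \<times> UNIV)). y w * AA w x')"
      unfolding II_def using fI fL by (subst sum.insert) auto
    also have "(\<Sum>w\<in>Some ` (Inl ` I \<union> Inr ` (L \<times> UNIV)). y w * AA w x')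
       = (\<Sum>q\<in>Inl ` I \<union> Inr ` (L \<times> UNIV). y (Some q) * AA (Some q) x')"
      by (subst sum.reindex) auto
    also have "\<dots> = (\<Sum>q\<in>Inl ` I. y (Some q) * AA (Some q) x') + (\<Sum>q\<in>Inr ` (L \<times> UNIV). y (Some q) * AA (Some q) x')"
      using fI fL by (intro sum.union_disjoint) auto
    also have "(\<Sum>q\<in>Inl ` I. y (Some q) * AA (Some q) x') = (\<Sum>i\<in>I. y (Some (Inl i)) * (A i x - c i))"
      by (subst sum.reindex) (auto simp: AA_def Sx x1)
    also have "(\<Sum>q\<in>Inr ` (L \<times> UNIV). y (Some q) * AA (Some q) x') = (\<Sum>lb\<in>L \<times> UNIV. y (Some (Inr lb)) * AA (Some (Inr lb)) x')"
      by (subst sum.reindex) auto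
    also have "\<dots> = (\<Sum>l\<in>L. \<Sum>b\<in>UNIV. y (Some (Inr (l, b))) * AA (Some (Inr (l, b))) x')"
      by (simp add: sum.cartesian_product case_prod_beta')
    also have "\<dots> = (\<Sum>l\<in>L. - \<mu> l * G l x)"
      by (intro sum.cong) (auto simp: UNIV_bool AA_def Sx \<mu>_def algebra_simps)
    finally have eq: "f x - v = y None * AA None x' + (\<Sum>i\<in>I. y (Some (Inl i)) * (A i x - c i)) + (\<Sum>l\<in>L. - \<mu> l * G l x)" by (simp add: add.assoc)
    have "0 \<le> y None * AA None x'" using y(1) x1 by (simp add: AA_def II_def)
    moreover have "0 \<le> (\<Sum>i\<in>I. y (Some (Inl i)) * (A i x - c i))"
      using y(1) hx by (intro sum_nonneg mult_nonneg_nonneg) (auto simp: II_def)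
    moreover have "(\<Sum>l\<in>L. - \<mu> l * G l x) = - (\<Sum>l\<in>L. \<mu> l * G l x)"
      by (simp add: sum_negf)
    ultimately show "v \<le> f x + (\<Sum>l\<in>L. \<mu> l * G l x)" using eq by linarith
  qed
qed


definition sg :: "('v \<times> 'v) \<times> bool \<Rightarrow> real" where
  "sg a = (if snd a then 1 else -1)"

definition flip :: "('v \<times> 'v) \<times> bool \<Rightarrow> ('v \<times> 'v) \<times> bool" where
  "flip a = (fst a, \<not> snd a)"

inductive walk :: "('v \<times> 'v) set \<Rightarrow> 'v path \<Rightarrow> 'v \<Rightarrow> 'v \<Rightarrow> bool" for E where
  wnil: "walk E [] s s"
| wcons: "fst a \<in> E \<Longrightarrow> tail_of a = s \<Longrightarrow> walk E W (head_of a) t \<Longrightarrow> walk E (a # W) s t"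

lemma walk_tele: "walk E W s t \<Longrightarrow> (\<Sum>a\<leftarrow>W. g (head_of a) - g (tail_of a)) = g t - (g s :: real)"
  by (induction rule: walk.induct) auto

lemma walk_arcs: "walk E W s t \<Longrightarrow> \<forall>a\<in>set W. fst a \<in> E"
  by (induction rule: walk.induct) auto

lemma walk_append: "walk E W1 s m \<Longrightarrow> walk E W2 m t \<Longrightarrow> walk E (W1 @ W2) s t"
  by (induction rule: walk.induct) (auto intro: walk.intros)

lemma walk_rev: "walk E W s t \<Longrightarrow> walk E (rev (map flip W)) t s"
proof (induction rule: walk.induct)
  case (wnil s) then show ?case by (auto intro: walk.intros)
next
  case (wcons a s W t)
  have "walk E [flip a] (head_of a) s"
    using wcons by (auto intro!: walk.intros simp: flip_def head_of_def tail_of_def)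
  then show ?case using walk_append[OF wcons.IH] by simp
qed

lemma rtrancl_walk: "(u, v) \<in> (E \<union> E\<inverse>)\<^sup>* \<Longrightarrow> \<exists>W. walk E W u v"
proof (induction rule: converse_rtrancl_induct)
  case base then show ?case by (auto intro: walk.intros)
next
  case (step y z)
  then obtain W where W: "walk E W z v" by blast
  from step(1) show ?case
  proof
    assume "(y, z) \<in> E"
    then have "walk E (((y, z), True) # W) y v"
      using W by (auto intro!: walk.intros simp: head_of_def tail_of_def)
    then show ?thesis by blast
  next
    assume "(y, z) \<in> E\<inverse>"
    then have "walk E (((z, y), False) # W) y v"
      using W by (auto intro!: walk.intros simp: head_of_def tail_of_def)
    then show ?thesis by blast
  qed
qed

lemma chain_walk:
  "C \<noteq> [] \<Longrightarrow> (\<forall>a\<in>set C. fst a \<in> E) \<Longrightarrow>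
   (\<forall>n. Suc n < length C \<longrightarrow> head_of (C ! n) = tail_of (C ! Suc n)) \<Longrightarrow>
   walk E C (tail_of (hd C)) (head_of (last C))"
proof (induction C)
  case Nil then show ?case by simp
next
  case (Cons a C)
  show ?case
  proof (cases "C = []")
    case True
    then show ?thesis using Cons by (auto intro!: walk.intros)
  next
    case False
    have ch: "\<forall>n. Suc n < length C \<longrightarrow> head_of (C ! n) = tail_of (C ! Suc n)"
      using Cons.prems(3) by (metis Suc_less_eq length_Cons nth_Cons_Suc)
    have "head_of a = tail_of (hd C)"
      using Cons.prems(3)[rule_format, of 0] False by (simp add: hd_conv_nth)
    then have "walk E C (head_of a) (head_of (last C))"
      using Cons.IH[OF False _ ch] Cons.prems(2) by simp
    then show ?thesis using Cons.prems(2) False by (auto intro!: walk.intros)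
  qed
qed

lemma closed_walk: "closed_path E C \<Longrightarrow> walk E C (tail_of (hd C)) (tail_of (hd C))"
  unfolding closed_path_def using chain_walk[of C E] by metis

definition wv :: "'v flow \<Rightarrow> ('v \<times> 'v \<Rightarrow> int) \<Rightarrow> ('v \<times> 'v) \<Rightarrow> real" where
  "wv d dp e = d e True - d e False - real_of_int (dp e)"

definition ws :: "('v \<times> 'v \<Rightarrow> real) \<Rightarrow> 'v path \<Rightarrow> real" where
  "ws w W = (\<Sum>a\<leftarrow>W. sg a * w (fst a))"

lemma ws_append: "ws w (W1 @ W2) = ws w W1 + ws w W2"
  by (simp add: ws_def)

lemma ws_rev: "ws w (rev (map flip W)) = - ws w W"
  by (induction W) (auto simp: ws_def sg_def flip_def)

lemma ws_pfs: "path_flow_sum d C - path_offset_sum dp C = ws (wv d dp) C"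
  by (induction C) (auto simp: ws_def path_flow_sum_def path_offset_sum_def wv_def sg_def)

lemma ws_vec:
  assumes "finite E" shows "\<forall>a\<in>set W. fst a \<in> E \<Longrightarrow>
    (\<Sum>a\<leftarrow>W. sg a * h (fst a)) = (\<Sum>e\<in>E. path_vec W e * h e)"
proof (induction W)
  case Nil then show ?case by (simp add: path_vec_def)
next
  case (Cons a W)
  have pv: "path_vec (a # W) e = (if fst a = e then sg a else 0) + path_vec W e" for e
    by (simp add: path_vec_def sg_def)
  have "(\<Sum>e\<in>E. path_vec (a # W) e * h e) = (\<Sum>e\<in>E. (if fst a = e then sg a * h e else 0)) + (\<Sum>e\<in>E. path_vec W e * h e)"
    unfolding pv sum.distrib[symmetric] by (intro sum.cong) (auto simp: distrib_right)
  also have "(\<Sum>e\<in>E. (if fst a = e then sg a * h e else 0)) = sg a * h (fst a)"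
    using Cons.prems assms by (simp add: sum.delta)
  finally show ?case using Cons by simp
qed

lemma pv_out: "\<forall>a\<in>set W. fst a \<in> E \<Longrightarrow> e \<notin> E \<Longrightarrow> path_vec W e = 0"
  by (induction W) (auto simp: path_vec_def)

lemma walk_cycle:
  assumes fE: "finite E" and EV: "E \<subseteq> V \<times> V" and W: "walk E W s s"
  shows "path_vec W \<in> cycle_space V E"
proof -
  have arcs: "\<forall>a\<in>set W. fst a \<in> E" using walk_arcs[OF W] .
  have "(\<Sum>e\<in>{e\<in>E. fst e = v}. path_vec W e) = (\<Sum>e\<in>{e\<in>E. snd e = v}. path_vec W e)" for v
  proof -
    define g :: "'a \<Rightarrow> real" where "g u = (if u = v then 1 else 0)" for u
    have "(\<Sum>e\<in>{e\<in>E. fst e = v}. path_vec W e) = (\<Sum>e\<in>E. path_vec W e * g (fst e))"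
      using fE by (simp add: g_def sum.inter_filter[symmetric] if_distrib cong: if_cong)
    also have "\<dots> = (\<Sum>a\<leftarrow>W. sg a * g (fst (fst a)))"
      using ws_vec[OF fE arcs, of "\<lambda>e. g (fst e)"] by simp
    finally have 1: "(\<Sum>e\<in>{e\<in>E. fst e = v}. path_vec W e) = (\<Sum>a\<leftarrow>W. sg a * g (fst (fst a)))" .
    have "(\<Sum>e\<in>{e\<in>E. snd e = v}. path_vec W e) = (\<Sum>e\<in>E. path_vec W e * g (snd e))"
      using fE by (simp add: g_def sum.inter_filter[symmetric] if_distrib cong: if_cong)
    also have "\<dots> = (\<Sum>a\<leftarrow>W. sg a * g (snd (fst a)))"
      using ws_vec[OF fE arcs, of "\<lambda>e. g (snd e)"] by simp
    finally have 2: "(\<Sum>e\<in>{e\<in>E. snd e = v}. path_vec W e) = (\<Sum>a\<leftarrow>W. sg a * g (snd (fst a)))" .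
    have "(\<Sum>a\<leftarrow>W. sg a * g (snd (fst a))) - (\<Sum>a\<leftarrow>W. sg a * g (fst (fst a)))
        = (\<Sum>a\<leftarrow>W. g (head_of a) - g (tail_of a))"
      by (simp add: sum_list_subtractf[symmetric] sg_def head_of_def tail_of_def)
        (intro arg_cong[where f=sum_list] map_cong, auto)
    also have "\<dots> = 0" using walk_tele[OF W] by simp
    finally show ?thesis using 1 2 by simp
  qed
  then show ?thesis unfolding cycle_space_def using pv_out[OF arcs] by auto
qed


lemma closed_walk_zero:
  assumes fE: "finite E" and EV: "E \<subseteq> V \<times> V" and fG: "finite \<Gamma>"
    and paths: "\<forall>C\<in>\<Gamma>. closed_path E C" and span: "spans_cycle_space V E \<Gamma>"
    and d: "d \<in> Aset dp \<Gamma>" and W: "walk E W s s"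
  shows "ws (wv d dp) W = 0"
proof -
  let ?w = "wv d dp"
  have arcs: "\<forall>a\<in>set W. fst a \<in> E" using walk_arcs[OF W] .
  obtain \<alpha> where al: "path_vec W = (\<lambda>e. \<Sum>C\<in>\<Gamma>. \<alpha> C * path_vec C e)"
    using span walk_cycle[OF fE EV W] unfolding spans_cycle_space_def by blast
  have "ws ?w W = (\<Sum>e\<in>E. path_vec W e * ?w e)"
    unfolding ws_def using ws_vec[OF fE arcs] .
  also have "\<dots> = (\<Sum>e\<in>E. \<Sum>C\<in>\<Gamma>. \<alpha> C * (path_vec C e * ?w e))"
    unfolding al by (intro sum.cong refl) (simp add: sum_distrib_right mult.assoc)
  also have "\<dots> = (\<Sum>C\<in>\<Gamma>. \<alpha> C * (\<Sum>e\<in>E. path_vec C e * ?w e))"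
    by (subst sum.swap) (simp add: sum_distrib_left)
  also have "\<dots> = (\<Sum>C\<in>\<Gamma>. \<alpha> C * 0)"
  proof (intro sum.cong refl)
    fix C assume C: "C \<in> \<Gamma>"
    have carcs: "\<forall>a\<in>set C. fst a \<in> E" using paths C by (simp add: closed_path_def)
    have "(\<Sum>e\<in>E. path_vec C e * ?w e) = ws ?w C"
      unfolding ws_def using ws_vec[OF fE carcs] by simp
    also have "\<dots> = 0" using ws_pfs[of d C dp] d C by (simp add: Aset_def)
    finally show "\<alpha> C * (\<Sum>e\<in>E. path_vec C e * ?w e) = \<alpha> C * 0" by simp
  qed
  finally show ?thesis by simp
qed

lemma potentials:
  assumes fE: "finite E" and EV: "E \<subseteq> V \<times> V" and fG: "finite \<Gamma>"
    and conn: "connected_graph V E"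
    and paths: "\<forall>C\<in>\<Gamma>. closed_path E C" and span: "spans_cycle_space V E \<Gamma>"
    and d: "d \<in> Aset dp \<Gamma>"
  shows "\<exists>\<phi>. \<forall>e\<in>E. wv d dp e = \<phi> (snd e) - \<phi> (fst e)"
proof (cases "E = {}")
  case True then show ?thesis by simp
next
  case False
  then obtain r r' where "(r, r') \<in> E" by auto
  then have rV: "r \<in> V" using EV by auto
  let ?w = "wv d dp"
  have ex: "\<exists>W. walk E W r u" if "u \<in> V" for u
  proof -
    have "(r, u) \<in> (E \<union> E\<inverse>)\<^sup>*" using conn rV that unfolding connected_graph_def by simp
    then show ?thesis by (rule rtrancl_walk)
  qed
  have uniq: "ws ?w W1 = ws ?w W2" if "walk E W1 r u" "walk E W2 r u" for W1 W2 u
  proof -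
    have "walk E (W1 @ rev (map flip W2)) r r"
      using walk_append[OF that(1) walk_rev[OF that(2)]] .
    then have "ws ?w (W1 @ rev (map flip W2)) = 0"
      using closed_walk_zero[OF fE EV fG paths span d] by blast
    then show ?thesis by (simp add: ws_append ws_rev)
  qed
  define \<phi> where "\<phi> u = ws ?w (SOME W. walk E W r u)" for u
  have phi: "\<phi> u = ws ?w W" if "walk E W r u" for W u
  proof -
    have "walk E (SOME W. walk E W r u) r u" using that by (rule someI)
    then show ?thesis unfolding \<phi>_def using uniq[OF _ that] by simp
  qed
  show ?thesis
  proof (intro exI ballI)
    fix e assume e: "e \<in> E"
    obtain i j where ij: "e = (i, j)" by force
    have "i \<in> V" using e ij EV by auto
    then obtain Wi where Wi: "walk E Wi r i" using ex by blast
    have "walk E [(e, True)] i j"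
      using e ij walk.wcons[of "(e, True)" E i "[]" j] walk.wnil[of E j] by (simp add: head_of_def tail_of_def)
    then have "walk E (Wi @ [(e, True)]) r j" using walk_append[OF Wi] by blast
    then have "\<phi> j = ws ?w (Wi @ [(e, True)])" by (rule phi)
    then have "\<phi> j = ws ?w Wi + ?w e" by (simp add: ws_append ws_def sg_def)
    moreover have "\<phi> i = ws ?w Wi" using Wi by (rule phi)
    ultimately show "?w e = \<phi> (snd e) - \<phi> (fst e)" using ij by simp
  qed
qed


lemma floor_integral: "((\<lambda>t. real_of_int \<lfloor>a + t\<rfloor>) has_integral a) {0..1}"
proof -
  define n where "n = \<lfloor>a\<rfloor>"
  define f where "f = a - real_of_int n"
  have fl: "real_of_int n \<le> a" "a < real_of_int n + 1"
    unfolding n_def using real_of_int_floor_gt_diff_one[of a] of_int_floor_le[of a] by linarith+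
  have f01: "0 \<le> f" "f < 1" unfolding f_def n_def using real_of_int_floor_gt_diff_one[of a] of_int_floor_le[of a] by linarith+
  define m where "m = 1 - f"
  have m: "0 < m" "m \<le> 1" using f01 by (auto simp: m_def)
  have i1: "((\<lambda>t. real_of_int \<lfloor>a + t\<rfloor>) has_integral (m * real_of_int n)) {0..m}"
  proof (rule has_integral_spike_finite[of "{m}"])
    show "finite {m}" by simp
    show "real_of_int \<lfloor>a + t\<rfloor> = real_of_int n" if "t \<in> {0..m} - {m}" for t
    proof -
      have "real_of_int n \<le> a + t" "a + t < real_of_int n + 1"
        using that f01 fl unfolding m_def f_def by auto
      then have "\<lfloor>a + t\<rfloor> = n" by (simp add: floor_eq_iff)
      then show ?thesis by simp
    qed
    show "((\<lambda>t. real_of_int n) has_integral m * real_of_int n) {0..m}"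
      using has_integral_const_real[of "real_of_int n" 0 m] m by simp
  qed
  have i2: "((\<lambda>t. real_of_int \<lfloor>a + t\<rfloor>) has_integral ((1 - m) * (real_of_int n + 1))) {m..1}"
  proof (rule has_integral_spike_finite[of "{}"])
    show "finite {}" by simp
    show "real_of_int \<lfloor>a + t\<rfloor> = real_of_int n + 1" if "t \<in> {m..1} - {}" for t
    proof -
      have "real_of_int (n + 1) \<le> a + t" "a + t < real_of_int (n + 1) + 1"
        using that f01 fl unfolding m_def f_def by auto
      then have "\<lfloor>a + t\<rfloor> = n + 1" by (simp only: floor_eq_iff)
      then show ?thesis by simp
    qed
    show "((\<lambda>t. real_of_int n + 1) has_integral (1 - m) * (real_of_int n + 1)) {m..1}"
      using has_integral_const_real[of "real_of_int n + 1" m 1] m by simp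
  qed
  have "((\<lambda>t. real_of_int \<lfloor>a + t\<rfloor>) has_integral (m * real_of_int n + (1 - m) * (real_of_int n + 1))) {0..1}"
    by (rule has_integral_combine[OF _ _ i1 i2]) (use m in auto)
  moreover have "m * real_of_int n + (1 - m) * (real_of_int n + 1) = a"
    unfolding m_def f_def by (simp add: algebra_simps)
  ultimately show ?thesis by simp
qed


lemma ws_cong: "(\<forall>a\<in>set W. w1 (fst a) = w2 (fst a)) \<Longrightarrow> ws w1 W = ws w2 W"
  unfolding ws_def by (intro arg_cong[where f=sum_list] map_cong) auto

lemma ws_pot: "ws (\<lambda>e. g (snd e) - g (fst e)) W = (\<Sum>a\<leftarrow>W. g (head_of a) - g (tail_of a))"
  unfolding ws_def by (intro arg_cong[where f=sum_list] map_cong) (auto simp: sg_def head_of_def tail_of_def)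

lemma edge_lb:
  fixes a b p q :: real
  assumes "0 \<le> p" "p \<le> 1" "0 \<le> q" "q \<le> 1"
  shows "min 0 (a + b) + (if p - q \<ge> 0 then a - min 0 (a + b) else min 0 (a + b) - b) * (p - q) \<le> a * p + b * q"
proof -
  define m where "m = min 0 (a + b)"
  have A: "0 \<le> (a + b - m) * q" "0 \<le> (a + b - m) * p" unfolding m_def using assms
    by (auto intro!: mult_nonneg_nonneg)
  have m0: "- m \<ge> 0" by (simp add: m_def)
  have B: "0 \<le> - m * (1 - p)" "0 \<le> - m * (1 - q)"
    using mult_nonneg_nonneg[OF m0, of "1 - p"] mult_nonneg_nonneg[OF m0, of "1 - q"] assms by auto
  show ?thesis
  proof (cases "p - q \<ge> 0")
    case True
    have "a * p + b * q - (m + (a - m) * (p - q)) = (a + b - m) * q + (- m * (1 - p))"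
      by (simp add: algebra_simps)
    then show ?thesis using True A B unfolding m_def[symmetric] by simp
  next
    case False
    have "a * p + b * q - (m + (m - b) * (p - q)) = (a + b - m) * p + (- m * (1 - q))"
      by (simp add: algebra_simps)
    then show ?thesis using False A B unfolding m_def[symmetric] by simp
  qed
qed

lemma integrality:
  assumes fE: "finite E" and EV: "E \<subseteq> V \<times> V" and fG: "finite \<Gamma>"
    and conn: "connected_graph V E"
    and paths: "\<forall>C\<in>\<Gamma>. closed_path E C" and span: "spans_cycle_space V E \<Gamma>"
    and d: "d \<in> Aset dp \<Gamma>" and box: "\<forall>e\<in>E. \<forall>b. d e b \<in> {0..1}"
  shows "PU E \<Gamma> dp c \<le> ereal (cost E c d)"
proof -
  obtain \<phi> where phi: "\<forall>e\<in>E. wv d dp e = \<phi> (snd e) - \<phi> (fst e)"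
    using potentials[OF fE EV fG conn paths span d] by blast
  define z where "z e = d e True - d e False" for e
  have zphi: "z e = real_of_int (dp e) + \<phi> (snd e) - \<phi> (fst e)" if "e \<in> E" for e
  proof -
    have "wv d dp e = \<phi> (snd e) - \<phi> (fst e)" using phi that by blast
    then show ?thesis unfolding wv_def z_def by linarith
  qed
  have zb: "-1 \<le> z e \<and> z e \<le> 1" if "e \<in> E" for e
  proof -
    have "d e True \<in> {0..1}" "d e False \<in> {0..1}" using box that by auto
    then show ?thesis by (auto simp: z_def)
  qed
  define m where "m e = min 0 (c e True + c e False)" for e
  define B where "B e = (if z e \<ge> 0 then c e True - m e else m e - c e False)" for e
  define kz where "kz t e = dp e + \<lfloor>\<phi> (snd e) + t\<rfloor> - \<lfloor>\<phi> (fst e) + t\<rfloor>" for t e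
  define F where "F t = (\<Sum>e\<in>E. m e + B e * real_of_int (kz t e))" for t
  have costd: "(\<Sum>e\<in>E. m e + B e * z e) \<le> cost E c d"
    unfolding cost_def
  proof (rule sum_mono)
    fix e assume e: "e \<in> E"
    have "d e True \<in> {0..1}" "d e False \<in> {0..1}" using box e by auto
    then show "m e + B e * z e \<le> c e True * d e True + c e False * d e False"
      using edge_lb[of "d e True" "d e False" "c e True" "c e False"]
      unfolding m_def B_def z_def by auto
  qed
  have kt: "PU E \<Gamma> dp c \<le> ereal (F t)" for t
  proof -
    have kr: "real_of_int (kz t e) - z e > -1 \<and> real_of_int (kz t e) - z e < 1" if "e \<in> E" for e
    proof -
      have "real_of_int (kz t e) = real_of_int (dp e) + real_of_int \<lfloor>\<phi> (snd e) + t\<rfloor> - real_of_int \<lfloor>\<phi> (fst e) + t\<rfloor>"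
        by (simp add: kz_def)
      moreover note zphi[OF that]
      moreover have "\<phi> (snd e) + t - 1 < real_of_int \<lfloor>\<phi> (snd e) + t\<rfloor>" "real_of_int \<lfloor>\<phi> (snd e) + t\<rfloor> \<le> \<phi> (snd e) + t"
        by (rule real_of_int_floor_gt_diff_one, rule of_int_floor_le)
      moreover have "\<phi> (fst e) + t - 1 < real_of_int \<lfloor>\<phi> (fst e) + t\<rfloor>" "real_of_int \<lfloor>\<phi> (fst e) + t\<rfloor> \<le> \<phi> (fst e) + t"
        by (rule real_of_int_floor_gt_diff_one, rule of_int_floor_le)
      ultimately show ?thesis by linarith
    qed
    have kv: "kz t e \<in> {-1, 0, 1} \<and> (z e \<ge> 0 \<longrightarrow> kz t e \<ge> 0) \<and> (z e < 0 \<longrightarrow> kz t e \<le> 0)" if "e \<in> E" for e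
    proof -
      have r1: "real_of_int (kz t e) > -2" "real_of_int (kz t e) < 2" using kr[OF that] zb[OF that] by linarith+
      have i1: "kz t e > -2" "kz t e < 2" using r1 by linarith+
      have "z e \<ge> 0 \<longrightarrow> real_of_int (kz t e) > -1" using kr[OF that] by linarith
      then have s1: "z e \<ge> 0 \<longrightarrow> kz t e \<ge> 0" by linarith
      have "z e < 0 \<longrightarrow> real_of_int (kz t e) < 1" using kr[OF that] by linarith
      then have s2: "z e < 0 \<longrightarrow> kz t e \<le> 0" by linarith
      show ?thesis using i1 s1 s2 by auto
    qed
    define x :: "'a flow" where "x e b = (if b then (if kz t e = 1 \<or> (kz t e = 0 \<and> c e True + c e False < 0) then 1 else 0)
        else (if kz t e = -1 \<or> (kz t e = 0 \<and> c e True + c e False < 0) then 1 else 0))" for e b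
    have xbin: "\<forall>e\<in>E. \<forall>b. x e b \<in> {0, 1}" by (simp add: x_def)
    have xdiff: "x e True - x e False = real_of_int (kz t e)" if "e \<in> E" for e
      using kv[OF that] by (auto simp: x_def)
    have xA: "x \<in> Aset dp \<Gamma>"
      unfolding Aset_def
    proof (intro CollectI ballI)
      fix C assume C: "C \<in> \<Gamma>"
      have cp: "closed_path E C" using paths C by blast
      have carcs: "\<forall>a\<in>set C. fst a \<in> E" using cp by (simp add: closed_path_def)
      let ?g = "\<lambda>v. real_of_int \<lfloor>\<phi> v + t\<rfloor>"
      have "ws (wv x dp) C = ws (\<lambda>e. ?g (snd e) - ?g (fst e)) C"
        using carcs by (intro ws_cong) (auto simp: wv_def xdiff kz_def)
      also have "\<dots> = 0" using ws_pot[of ?g C] walk_tele[OF closed_walk[OF cp], of ?g] by simp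
      finally show "path_flow_sum x C = path_offset_sum dp C" using ws_pfs[of x C dp] by simp
    qed
    have "cost E c x = F t"
      unfolding cost_def F_def
    proof (rule sum.cong[OF refl])
      fix e assume e: "e \<in> E"
      show "c e True * x e True + c e False * x e False = m e + B e * real_of_int (kz t e)"
        using kv[OF e] by (auto simp: x_def m_def B_def)
    qed
    moreover have "PU E \<Gamma> dp c \<le> ereal (cost E c x)"
      unfolding PU_def by (rule INF_lower) (use xA xbin in blast)
    ultimately show ?thesis by simp
  qed
  have int: "(F has_integral (\<Sum>e\<in>E. m e + B e * z e)) {0..1}"
  proof -
    have "((\<lambda>t. \<Sum>e\<in>E. m e + B e * real_of_int (kz t e)) has_integral (\<Sum>e\<in>E. m e + B e * z e)) {0..1}"
    proof (rule has_integral_sum[OF fE])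
      fix e assume e: "e \<in> E"
      have h1: "((\<lambda>t. real_of_int \<lfloor>\<phi> (snd e) + t\<rfloor>) has_integral \<phi> (snd e)) {0..1}" by (rule floor_integral)
      have h2: "((\<lambda>t. real_of_int \<lfloor>\<phi> (fst e) + t\<rfloor>) has_integral \<phi> (fst e)) {0..1}" by (rule floor_integral)
      have h3: "((\<lambda>t::real. real_of_int (dp e)) has_integral real_of_int (dp e)) {0..1}"
        using has_integral_const_real[of "real_of_int (dp e)" 0 1] by simp
      have h4: "((\<lambda>t. real_of_int (kz t e)) has_integral z e) {0..1}"
        using has_integral_diff[OF has_integral_add[OF h3 h1] h2] zphi[OF e] by (simp add: kz_def)
      have h5: "((\<lambda>t::real. m e) has_integral m e) {0..1}"
        using has_integral_const_real[of "m e" 0 1] by simp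
      show "((\<lambda>t. m e + B e * real_of_int (kz t e)) has_integral m e + B e * z e) {0..1}"
        using has_integral_add[OF h5 has_integral_mult_right[OF h4, of "B e"]] by simp
    qed
    then show ?thesis unfolding F_def .
  qed
  show ?thesis
  proof (cases "PU E \<Gamma> dp c")
    case (real p)
    have "p \<le> F t" for t using kt[of t] real by simp
    moreover have "((\<lambda>t::real. p) has_integral p) {0..1}"
      using has_integral_const_real[of p 0 1] by simp
    ultimately have "p \<le> (\<Sum>e\<in>E. m e + B e * z e)"
      using has_integral_le[OF _ int] by blast
    then show ?thesis using real costd by simp
  next
    case PInf
    then show ?thesis using kt[of 0] by simp
  next
    case MInf
    then show ?thesis by simp
  qed
qed


lemma pfs_lin: "path_flow_sum (\<lambda>e b. d1 e b + s * d2 e b) C = path_flow_sum d1 C + s * path_flow_sum d2 C"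
  by (induction C) (auto simp: path_flow_sum_def algebra_simps)

lemma pfs_cong: "(\<forall>a\<in>set C. \<forall>b. d1 (fst a) b = d2 (fst a) b) \<Longrightarrow> path_flow_sum d1 C = path_flow_sum d2 C"
  unfolding path_flow_sum_def by (intro arg_cong[where f=sum_list] map_cong) auto

lemma Aset_mono: "G1 \<subseteq> G2 \<Longrightarrow> Aset dp G2 \<subseteq> Aset dp G1"
  unfolding Aset_def by auto

lemma sum_L:
  fixes F :: "nat \<Rightarrow> 'e \<Rightarrow> bool \<Rightarrow> real"
  assumes "finite K'" "\<forall>k\<in>K'. finite (Ek k)"
  shows "(\<Sum>k\<in>K'. \<Sum>e\<in>Ek k. \<Sum>b\<in>(UNIV::bool set). F k e b)
       = (\<Sum>l\<in>Sigma K' (\<lambda>k. Ek k \<times> UNIV). F (fst l) (fst (snd l)) (snd (snd l)))"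
proof -
  have "(\<Sum>l\<in>Sigma K' (\<lambda>k. Ek k \<times> UNIV). F (fst l) (fst (snd l)) (snd (snd l)))
      = (\<Sum>k\<in>K'. \<Sum>eb\<in>Ek k \<times> UNIV. F k (fst eb) (snd eb))"
  proof -
    have "(\<Sum>k\<in>K'. \<Sum>eb\<in>Ek k \<times> UNIV. F k (fst eb) (snd eb)) = (\<Sum>(k,eb)\<in>Sigma K' (\<lambda>k. Ek k \<times> UNIV). F k (fst eb) (snd eb))"
      by (rule sum.Sigma) (use assms in auto)
    then show ?thesis by (simp add: case_prod_beta')
  qed
  also have "\<dots> = (\<Sum>k\<in>K'. \<Sum>e\<in>Ek k. \<Sum>b\<in>(UNIV::bool set). F k e b)"
    by (simp add: sum.cartesian_product case_prod_beta')
  finally show ?thesis by simp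
qed

lemma cost_split:
  fixes K :: nat
  assumes fE: "finite E" and cover: "(\<Union>k\<in>{1..K}. Ek k) = E"
    and split: "\<forall>e\<in>E. \<forall>b. (\<Sum>k\<in>{k\<in>{1..K}. e \<in> Ek k}. ck k e b) = c e b"
  shows "(\<Sum>k\<in>{1..K}. \<Sum>e\<in>Ek k. \<Sum>b\<in>(UNIV::bool set). ck k e b * d e b) = cost E c d"
proof -
  have EkE: "Ek k \<subseteq> E" if "k \<in> {1..K}" for k using cover that by blast
  have "(\<Sum>k\<in>{1..K}. \<Sum>e\<in>Ek k. \<Sum>b\<in>(UNIV::bool set). ck k e b * d e b)
      = (\<Sum>k\<in>{1..K}. \<Sum>e\<in>{e. e \<in> E \<and> e \<in> Ek k}. \<Sum>b\<in>(UNIV::bool set). ck k e b * d e b)"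
  proof (rule sum.cong[OF refl])
    fix k assume "k \<in> {1..K}"
    then have "{e. e \<in> E \<and> e \<in> Ek k} = Ek k" using EkE by blast
    then show "(\<Sum>e\<in>Ek k. \<Sum>b\<in>(UNIV::bool set). ck k e b * d e b) = (\<Sum>e\<in>{e. e \<in> E \<and> e \<in> Ek k}. \<Sum>b\<in>(UNIV::bool set). ck k e b * d e b)"
      by simp
  qed
  also have "\<dots> = (\<Sum>e\<in>E. \<Sum>k\<in>{k. k \<in> {1..K} \<and> e \<in> Ek k}. \<Sum>b\<in>(UNIV::bool set). ck k e b * d e b)"
    using fE by (intro sum.swap_restrict) auto
  also have "\<dots> = (\<Sum>e\<in>E. \<Sum>b\<in>(UNIV::bool set). c e b * d e b)"
  proof (rule sum.cong[OF refl])
    fix e assume e: "e \<in> E"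
    have "(\<Sum>k\<in>{k. k \<in> {1..K} \<and> e \<in> Ek k}. \<Sum>b\<in>(UNIV::bool set). ck k e b * d e b)
        = (\<Sum>b\<in>(UNIV::bool set). (\<Sum>k\<in>{k. k \<in> {1..K} \<and> e \<in> Ek k}. ck k e b) * d e b)"
      by (subst sum.swap) (simp add: sum_distrib_right)
    also have "\<dots> = (\<Sum>b\<in>(UNIV::bool set). c e b * d e b)"
      using split e by simp
    finally show "(\<Sum>k\<in>{k. k \<in> {1..K} \<and> e \<in> Ek k}. \<Sum>b\<in>(UNIV::bool set). ck k e b * d e b) = (\<Sum>b\<in>(UNIV::bool set). c e b * d e b)" .
  qed
  also have "\<dots> = cost E c d"
    unfolding cost_def by (simp add: UNIV_bool add.commute)
  finally show ?thesis .
qed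

lemma ereal_all_le: "(\<And>v. ereal v \<le> x) \<Longrightarrow> x = (\<infinity>::ereal)"
proof (cases x)
  case (real r)
  assume "\<And>v. ereal v \<le> x"
  then have "ereal (r + 1) \<le> x" .
  then show ?thesis using real by simp
qed auto

theorem theorem2:
  fixes V :: "'v set" and E :: "('v \<times> 'v) set"
    and \<Gamma> :: "'v path set" and dp :: "'v \<times> 'v \<Rightarrow> int" and c :: "'v flow"
    and K :: nat and Ek :: "nat \<Rightarrow> ('v \<times> 'v) set" and Gk :: "nat \<Rightarrow> 'v path set"
    and ck :: "nat \<Rightarrow> 'v flow"
  assumes finV: "finite V"
    and EV: "E \<subseteq> V \<times> V"
    and conn: "connected_graph V E"
    and finG: "finite \<Gamma>"
    and paths: "\<forall>C\<in>\<Gamma>. closed_path E C"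
    and indep: "independent_paths \<Gamma>"
    and span: "spans_cycle_space V E \<Gamma>"
    and cover: "(\<Union>k\<in>{1..K}. Ek k) = E"
    and subG: "\<forall>k\<in>{1..K}. Gk k \<subseteq> \<Gamma>"
    and subpaths: "\<forall>k\<in>{1..K}. \<forall>C\<in>Gk k. closed_path (Ek k) C"
    and split: "\<forall>e\<in>E. \<forall>b. (\<Sum>k\<in>{k\<in>{1..K}. e \<in> Ek k}. ck k e b) = c e b"
  shows "LR E dp K Ek Gk ck \<le> PU E \<Gamma> dp c \<and>
         ((\<Inter>k\<in>{1..K}. Aset dp (Gk k)) = Aset dp \<Gamma> \<longrightarrow> LR E dp K Ek Gk ck = PU E \<Gamma> dp c)"
proof -
  have fE: "finite E" using finV EV finite_subset by blast
  have EkE: "Ek k \<subseteq> E" if "k \<in> {1..K}" for k using cover that by blast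
  have fEk: "\<forall>k\<in>{1..K}. finite (Ek k)" using EkE fE finite_subset by blast
  have csplit: "(\<Sum>k\<in>{1..K}. \<Sum>e\<in>Ek k. \<Sum>b\<in>(UNIV::bool set). ck k e b * d e b) = cost E c d" for d
    by (rule cost_split[OF fE cover split])
  have part1: "LR E dp K Ek Gk ck \<le> PU E \<Gamma> dp c"
    unfolding LR_def
  proof (rule SUP_least)
    fix lam :: "nat \<Rightarrow> 'v flow"
    show "(INF p\<in>{(ds, d). (\<forall>k\<in>{1..K}. ds k \<in> Aset dp (Gk k) \<and> (\<forall>e\<in>Ek k. \<forall>b. ds k e b \<in> {0..1}))
                       \<and> (\<forall>e\<in>E. \<forall>b. d e b \<in> {0..1})}.
            ereal (lagrangian K Ek ck lam (fst p) (snd p))) \<le> PU E \<Gamma> dp c"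
      unfolding PU_def
    proof (rule INF_greatest)
      fix d assume d: "d \<in> {d. d \<in> Aset dp \<Gamma> \<and> (\<forall>e\<in>E. \<forall>b. d e b \<in> {0, 1})}"
      have mem: "((\<lambda>k. d), d) \<in> {(ds, d). (\<forall>k\<in>{1..K}. ds k \<in> Aset dp (Gk k) \<and> (\<forall>e\<in>Ek k. \<forall>b. ds k e b \<in> {0..1}))
                       \<and> (\<forall>e\<in>E. \<forall>b. d e b \<in> {0..1})}"
      proof -
        have "d \<in> Aset dp (Gk k)" if "k \<in> {1..K}" for k
          using d subG that Aset_mono[of "Gk k" \<Gamma> dp] by blast
        moreover have "d e b \<in> {0..1}" if "e \<in> E" for e b
        proof -
          have "d e b = 0 \<or> d e b = 1" using d that by auto
          then show ?thesis by auto
        qed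
        ultimately show ?thesis using EkE by blast
      qed
      have "lagrangian K Ek ck lam (\<lambda>k. d) d = cost E c d"
        unfolding lagrangian_def using csplit[of d] by simp
      then show "(INF p\<in>{(ds, d). (\<forall>k\<in>{1..K}. ds k \<in> Aset dp (Gk k) \<and> (\<forall>e\<in>Ek k. \<forall>b. ds k e b \<in> {0..1}))
                       \<and> (\<forall>e\<in>E. \<forall>b. d e b \<in> {0..1})}.
            ereal (lagrangian K Ek ck lam (fst p) (snd p))) \<le> ereal (cost E c d)"
        using INF_lower[OF mem, of "\<lambda>p. ereal (lagrangian K Ek ck lam (fst p) (snd p))"] by simp
    qed
  qed
  have part2: "PU E \<Gamma> dp c \<le> LR E dp K Ek Gk ck"
    if hyp: "(\<Inter>k\<in>{1..K}. Aset dp (Gk k)) = Aset dp \<Gamma>"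
  proof -
    define L :: "(nat \<times> ('v \<times> 'v) \<times> bool) set" where "L = Sigma {1..K} (\<lambda>k. Ek k \<times> UNIV)"
    define J where "J = L \<union> ({0} \<times> (E \<times> UNIV))"
    define f :: "((nat \<times> ('v \<times> 'v) \<times> bool) \<Rightarrow> real) \<Rightarrow> real"
      where "f x = (\<Sum>l\<in>L. ck (fst l) (fst (snd l)) (snd (snd l)) * x l)" for x
    define G :: "(nat \<times> ('v \<times> 'v) \<times> bool) \<Rightarrow> ((nat \<times> ('v \<times> 'v) \<times> bool) \<Rightarrow> real) \<Rightarrow> real"
      where "G l x = x l - x (0, snd l)" for l x
    define A :: "((nat \<times> ('v \<times> 'v) \<times> bool) \<times> bool) + ((nat \<times> 'v path) \<times> bool)
        \<Rightarrow> ((nat \<times> ('v \<times> 'v) \<times> bool) \<Rightarrow> real) \<Rightarrow> real"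
      where "A q x = (case q of Inl (j, s) \<Rightarrow> (if s then x j else - x j)
         | Inr ((k, C), s) \<Rightarrow> (if s then path_flow_sum (\<lambda>e b. x (k, (e, b))) C
                                 else - path_flow_sum (\<lambda>e b. x (k, (e, b))) C))" for q x
    define cc :: "((nat \<times> ('v \<times> 'v) \<times> bool) \<times> bool) + ((nat \<times> 'v path) \<times> bool) \<Rightarrow> real"
      where "cc q = (case q of Inl (j, s) \<Rightarrow> (if s then 0 else -1)
         | Inr ((k, C), s) \<Rightarrow> (if s then path_offset_sum dp C else - path_offset_sum dp C))" for q
    define I :: "(((nat \<times> ('v \<times> 'v) \<times> bool) \<times> bool) + ((nat \<times> 'v path) \<times> bool)) set"
      where "I = Inl ` (J \<times> UNIV) \<union> Inr ` (Sigma {1..K} Gk \<times> UNIV)"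
    have fL: "finite L" unfolding L_def using fEk by (intro finite_SigmaI) auto
    have fJ: "finite J" unfolding J_def using fL fE by simp
    have fGk: "finite (Sigma {1..K} Gk)"
    proof -
      have "\<forall>k\<in>{1..K}. finite (Gk k)" using subG finG finite_subset by blast
      then show ?thesis by (intro finite_SigmaI) auto
    qed
    have fI: "finite I" unfolding I_def using fJ fGk by simp
    have lA: "\<forall>i\<in>I. lin (A i)"
    proof
      fix q assume "q \<in> I"
      show "lin (A q)"
      proof (cases q)
        case (Inl js)
        then show ?thesis unfolding lin_def A_def by (cases js) (auto simp: algebra_simps)
      next
        case (Inr kcs)
        then obtain k C s where "kcs = ((k, C), s)" by (metis prod.collapse)
        then show ?thesis unfolding lin_def A_def using Inr by (auto simp: pfs_lin)
      qed
    qed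
    have lf: "lin f" unfolding lin_def f_def
      by (simp add: algebra_simps sum.distrib sum_distrib_left)
    have lG: "\<forall>l\<in>L. lin (G l)" unfolding lin_def G_def by (simp add: algebra_simps)
    have bx: "x j = 0" if "\<forall>i\<in>I. 0 \<le> A i x" "j \<in> J" for x j
    proof -
      have "Inl (j, True) \<in> I" "Inl (j, False) \<in> I" using that(2) by (auto simp: I_def)
      then have "0 \<le> A (Inl (j, True)) x" "0 \<le> A (Inl (j, False)) x" using that(1) by blast+
      then show ?thesis by (simp add: A_def)
    qed
    have rec: "\<forall>x. (\<forall>i\<in>I. 0 \<le> A i x) \<and> (\<forall>l\<in>L. G l x = 0) \<longrightarrow> 0 \<le> f x"
    proof (intro allI impI)
      fix x assume h: "(\<forall>i\<in>I. 0 \<le> A i x) \<and> (\<forall>l\<in>L. G l x = 0)"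
      have "f x = 0" unfolding f_def using bx[of x] h by (intro sum.neutral) (auto simp: J_def)
      then show "0 \<le> f x" by simp
    qed
    have main: "\<forall>x. (\<forall>i\<in>I. cc i \<le> A i x) \<and> (\<forall>l\<in>L. G l x = 0) \<longrightarrow> v \<le> f x"
      if v: "ereal v \<le> PU E \<Gamma> dp c" for v
    proof (intro allI impI)
      fix x assume h: "(\<forall>i\<in>I. cc i \<le> A i x) \<and> (\<forall>l\<in>L. G l x = 0)"
      define d where "d e b = x (0, (e, b))" for e b
      have box: "\<forall>e\<in>E. \<forall>b. d e b \<in> {0..1}"
      proof (intro ballI allI)
        fix e b assume e: "e \<in> E"
        have "Inl ((0, (e, b)), True) \<in> I" "Inl ((0, (e, b)), False) \<in> I" using e by (auto simp: I_def J_def)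
        then have "cc (Inl ((0, (e, b)), True)) \<le> A (Inl ((0, (e, b)), True)) x"
          "cc (Inl ((0, (e, b)), False)) \<le> A (Inl ((0, (e, b)), False)) x" using h by blast+
        then show "d e b \<in> {0..1}" by (simp add: A_def cc_def d_def)
      qed
      have cons: "x (k, (e, b)) = d e b" if "k \<in> {1..K}" "e \<in> Ek k" for k e b
      proof -
        have "(k, (e, b)) \<in> L" using that by (simp add: L_def)
        then show ?thesis using h by (simp add: G_def d_def)
      qed
      have "d \<in> Aset dp (Gk k)" if k: "k \<in> {1..K}" for k
        unfolding Aset_def
      proof (intro CollectI ballI)
        fix C assume C: "C \<in> Gk k"
        have "Inr ((k, C), True) \<in> I" "Inr ((k, C), False) \<in> I" using k C by (auto simp: I_def)
        then have "cc (Inr ((k, C), True)) \<le> A (Inr ((k, C), True)) x"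
          "cc (Inr ((k, C), False)) \<le> A (Inr ((k, C), False)) x" using h by blast+
        then have eq: "path_flow_sum (\<lambda>e b. x (k, (e, b))) C = path_offset_sum dp C"
          by (simp add: A_def cc_def)
        have "\<forall>a\<in>set C. fst a \<in> Ek k" using subpaths k C by (simp add: closed_path_def)
        then have "path_flow_sum (\<lambda>e b. x (k, (e, b))) C = path_flow_sum d C"
          using cons[OF k] by (intro pfs_cong) auto
        then show "path_flow_sum d C = path_offset_sum dp C" using eq by simp
      qed
      then have "d \<in> Aset dp \<Gamma>" using hyp by blast
      then have "PU E \<Gamma> dp c \<le> ereal (cost E c d)"
        using integrality[OF fE EV finG conn paths span _ box] by blast
      then have vc: "v \<le> cost E c d" using v by (metis ereal_less_eq(3) order_trans)
      have "f x = (\<Sum>l\<in>L. ck (fst l) (fst (snd l)) (snd (snd l)) * d (fst (snd l)) (snd (snd l)))"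
        unfolding f_def using cons by (intro sum.cong) (auto simp: L_def)
      also have "\<dots> = (\<Sum>k\<in>{1..K}. \<Sum>e\<in>Ek k. \<Sum>b\<in>(UNIV::bool set). ck k e b * d e b)"
        unfolding L_def using sum_L[of "{1..K}" Ek "\<lambda>k e b. ck k e b * d e b"] fEk by simp
      also have "\<dots> = cost E c d" by (rule csplit)
      finally show "v \<le> f x" using vc by simp
    qed
    have claim: "ereal v \<le> LR E dp K Ek Gk ck" if v: "ereal v \<le> PU E \<Gamma> dp c" for v
    proof -
      obtain \<mu> where mu: "\<forall>x. (\<forall>i\<in>I. cc i \<le> A i x) \<longrightarrow> v \<le> f x + (\<Sum>l\<in>L. \<mu> l * G l x)"
        using lagr[OF fI fL lA lf lG rec main[OF v]] by blast
      define lam :: "nat \<Rightarrow> 'v flow" where "lam k e b = \<mu> (k, (e, b))" for k e b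
      show ?thesis
        unfolding LR_def
      proof (rule SUP_upper2[of lam])
        show "lam \<in> UNIV" by simp
        show "ereal v \<le> (INF p\<in>{(ds, d). (\<forall>k\<in>{1..K}. ds k \<in> Aset dp (Gk k) \<and> (\<forall>e\<in>Ek k. \<forall>b. ds k e b \<in> {0..1}))
                       \<and> (\<forall>e\<in>E. \<forall>b. d e b \<in> {0..1})}.
            ereal (lagrangian K Ek ck lam (fst p) (snd p)))"
        proof (rule INF_greatest)
          fix p :: "(nat \<Rightarrow> 'v flow) \<times> 'v flow" assume p: "p \<in> {(ds, d). (\<forall>k\<in>{1..K}. ds k \<in> Aset dp (Gk k) \<and> (\<forall>e\<in>Ek k. \<forall>b. ds k e b \<in> {0..1}))
                       \<and> (\<forall>e\<in>E. \<forall>b. d e b \<in> {0..1})}"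
          obtain ds d where pd: "p = (ds, d)" by force
          have ds: "\<forall>k\<in>{1..K}. ds k \<in> Aset dp (Gk k) \<and> (\<forall>e\<in>Ek k. \<forall>b. ds k e b \<in> {0..1})"
            and dd: "\<forall>e\<in>E. \<forall>b. d e b \<in> {0..1}" using p pd by auto
          define x :: "(nat \<times> ('v \<times> 'v) \<times> bool) \<Rightarrow> real"
            where "x j = (if fst j = 0 then d (fst (snd j)) (snd (snd j)) else ds (fst j) (fst (snd j)) (snd (snd j)))" for j
          have xc: "\<forall>i\<in>I. cc i \<le> A i x"
          proof
            fix q assume q: "q \<in> I"
            show "cc q \<le> A q x"
            proof (cases q)
              case (Inl js)
              then obtain j s where js: "q = Inl (j, s)" "j \<in> J" using q by (auto simp: I_def)
              obtain k e b where j: "j = (k, (e, b))" by (metis prod.collapse)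
              have "x j \<in> {0..1}"
              proof (cases "k = 0")
                case True
                then have "e \<in> E" using js(2) j by (auto simp: J_def L_def)
                then show ?thesis using dd True j by (simp add: x_def)
              next
                case False
                then have "k \<in> {1..K}" "e \<in> Ek k" using js(2) j by (auto simp: J_def L_def)
                then show ?thesis using ds False j by (simp add: x_def)
              qed
              then show ?thesis using js by (auto simp: A_def cc_def)
            next
              case (Inr kcs)
              then obtain k C s where q': "q = Inr ((k, C), s)" "k \<in> {1..K}" "C \<in> Gk k"
                using q by (auto simp: I_def)
              have "(\<lambda>e b. x (k, (e, b))) = ds k" using q'(2) by (auto simp: x_def fun_eq_iff)
              moreover have "path_flow_sum (ds k) C = path_offset_sum dp C"
                using ds q' by (auto simp: Aset_def)
              ultimately show ?thesis using q' by (simp add: A_def cc_def)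
            qed
          qed
          have "lagrangian K Ek ck lam ds d
              = (\<Sum>k\<in>{1..K}. \<Sum>e\<in>Ek k. \<Sum>b\<in>(UNIV::bool set).
                   ck k e b * x (k, (e, b)) + \<mu> (k, (e, b)) * (x (k, (e, b)) - x (0, (e, b))))"
            unfolding lagrangian_def by (intro sum.cong refl) (auto simp: x_def lam_def)
          also have "\<dots> = (\<Sum>l\<in>L. ck (fst l) (fst (snd l)) (snd (snd l)) * x l + \<mu> l * G l x)"
            unfolding L_def G_def
            using sum_L[of "{1..K}" Ek "\<lambda>k e b. ck k e b * x (k, (e, b)) + \<mu> (k, (e, b)) * (x (k, (e, b)) - x (0, (e, b)))"] fEk
            by simp
          also have "\<dots> = f x + (\<Sum>l\<in>L. \<mu> l * G l x)"
            unfolding f_def by (simp add: sum.distrib)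
          finally have "lagrangian K Ek ck lam ds d = f x + (\<Sum>l\<in>L. \<mu> l * G l x)" .
          moreover have "v \<le> f x + (\<Sum>l\<in>L. \<mu> l * G l x)" using mu xc by blast
          ultimately show "ereal v \<le> ereal (lagrangian K Ek ck lam (fst p) (snd p))" using pd by simp
        qed
      qed
    qed
    show ?thesis
    proof (cases "PU E \<Gamma> dp c")
      case (real r)
      then show ?thesis using claim[of r] by simp
    next
      case PInf
      then have "LR E dp K Ek Gk ck = \<infinity>" using claim by (intro ereal_all_le) simp
      then show ?thesis by simp
    next
      case MInf
      then show ?thesis by simp
    qed
  qed
  show ?thesis using part1 part2 by (auto intro: antisym)
qed

end
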